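(* Let $A, B, C, F \in \mathbb{R}^{n\times n}$ with $A$ invertible, and suppose $\sigma_{\max}(CA^{-1}B) < 1$. Then the matrix equation $$AX + B\lvert CX\rvert = F$$ has exactly one solution $X \in \mathbb{R}^{n\times n}$.
   Context: $\sigma_{\max}(\cdot)$ is the largest singular value and $\lvert M\rvert$ the entrywise absolute value of a matrix $M$. *)

theory Defs
  imports "HOL-Analysis.Analysis"
begin

definition singular_values :: "real^'n^'n \<Rightarrow> real set" where
  "singular_values M = {s. s \<ge> 0 \<and> (\<exists>v. v \<noteq> 0 \<and> (transpose M ** M) *v v = (s^2) *\<^sub>R v)}"

definition sigma_max :: "real^'n^'n \<Rightarrow> real" where
  "sigma_max M = Max (singular_values M)"

definition mat_abs :: "real^'n^'m \<Rightarrow> real^'n^'m" where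
  "mat_abs M = (\<chi> i j. \<bar>M $ i $ j\<bar>)"

end

theory Submission
  imports Defs
begin

lemma quad_form: fixes M :: "real^'n^'n"
  shows "v \<bullet> ((transpose M ** M) *v w) = (M *v v) \<bullet> (M *v w)"
  by (metis dot_lmul_matrix matrix_vector_mul_assoc transpose_matrix_vector inner_commute)

lemma norm_sq_mat: fixes D :: "real^'n^'n"
  shows "(norm D)^2 = (\<Sum>i\<in>UNIV. \<Sum>j\<in>UNIV. (D$i$j)^2)"
  unfolding power2_norm_eq_inner by (simp add: inner_vec_def power2_eq_square)

lemma norm_sq_vec: fixes v :: "real^'n"
  shows "(norm v)^2 = (\<Sum>i\<in>UNIV. (v$i)^2)"
  unfolding power2_norm_eq_inner by (simp add: inner_vec_def power2_eq_square)

lemma sv_finite: fixes M :: "real^'n^'n"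
  shows "finite (singular_values M)"
proof -
  let ?P = "transpose M ** M"
  define f where "f s = (SOME v. v \<noteq> 0 \<and> ?P *v v = (s^2) *\<^sub>R v)" for s
  have f: "f s \<noteq> 0 \<and> ?P *v f s = (s^2) *\<^sub>R f s" if "s \<in> singular_values M" for s
  proof -
    have "\<exists>v. v \<noteq> 0 \<and> ?P *v v = (s^2) *\<^sub>R v" using that by (auto simp: singular_values_def)
    then show ?thesis unfolding f_def by (rule someI_ex)
  qed
  have orth: "f s \<bullet> f t = 0" if "s \<in> singular_values M" "t \<in> singular_values M" "s \<noteq> t" for s t
  proof -
    have "s^2 \<noteq> t^2" using that by (auto simp: singular_values_def power2_eq_iff_nonneg)
    have "f s \<bullet> (?P *v f t) = (M *v f s) \<bullet> (M *v f t)" by (rule quad_form)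
    moreover have "f t \<bullet> (?P *v f s) = (M *v f t) \<bullet> (M *v f s)" by (rule quad_form)
    ultimately have "t^2 * (f s \<bullet> f t) = s^2 * (f s \<bullet> f t)"
      using f[OF that(1)] f[OF that(2)] by (simp add: inner_commute)
    then show ?thesis using \<open>s^2 \<noteq> t^2\<close> by simp
  qed
  have inj: "inj_on f (singular_values M)"
  proof (rule inj_onI, rule ccontr)
    fix s t assume "s \<in> singular_values M" "t \<in> singular_values M" "f s = f t" "s \<noteq> t"
    then show False using orth[of s t] f[of s] by simp
  qed
  have "pairwise orthogonal (f ` singular_values M)"
    unfolding pairwise_def orthogonal_def using orth by auto
  moreover have "0 \<notin> f ` singular_values M" using f by auto
  ultimately have "independent (f ` singular_values M)" by (rule pairwise_orthogonal_independent)
  then have "finite (f ` singular_values M)" using independent_bound by blast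
  then show ?thesis using finite_imageD inj by blast
qed

lemma sv_bound: fixes M :: "real^'n^'n"
  shows "sigma_max M \<ge> 0 \<and> norm (M *v v) \<le> sigma_max M * norm v"
proof -
  let ?P = "transpose M ** M"
  let ?g = "\<lambda>v. (norm (M *v v))^2"
  have "compact (sphere (0::real^'n) 1)" by simp
  moreover have "sphere (0::real^'n) 1 \<noteq> {}"
    using vector_choose_size[of 1] by (auto simp: dist_norm)
  moreover have "continuous_on (sphere 0 1) ?g"
    by (intro continuous_intros linear_continuous_on matrix_vector_mul_bounded_linear)
  ultimately obtain v0 where v0: "v0 \<in> sphere 0 1" "\<And>y. y \<in> sphere 0 1 \<Longrightarrow> ?g y \<le> ?g v0"
    using continuous_attains_sup[of "sphere (0::real^'n) 1" ?g] by blast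
  define l where "l = ?g v0"
  have nv0: "norm v0 = 1" using v0 by simp
  have iv0: "v0 \<bullet> v0 = 1" by (metis power2_norm_eq_inner nv0 power_one)
  have gen: "?g u \<le> l * (norm u)^2" for u
  proof (cases "u = 0")
    case True then show ?thesis by simp
  next
    case False
    have "?g (u /\<^sub>R norm u) \<le> l" using v0(2)[of "u /\<^sub>R norm u"] False by (simp add: l_def)
    moreover have "M *v (u /\<^sub>R norm u) = (M *v u) /\<^sub>R norm u"
      by (simp add: matrix_vector_mult_scaleR)
    ultimately have "(norm (M *v u))^2 / (norm u)^2 \<le> l" using False
      by (simp add: power_mult_distrib power_inverse divide_inverse mult.commute)
    then show ?thesis using False by (simp add: field_simps)
  qed
  define u where "u = ?P *v v0 - l *\<^sub>R v0"
  have "u = 0"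
  proof (rule ccontr)
    assume "u \<noteq> 0"
    define b where "b = ?g u - l * (norm u)^2"
    have b: "b \<le> 0" using gen[of u] by (simp add: b_def)
    have key: "2 * t * (u \<bullet> u) + t^2 * b \<le> 0" for t :: real
    proof -
      have "?g (v0 + t *\<^sub>R u) \<le> l * (norm (v0 + t *\<^sub>R u))^2" by (rule gen)
      moreover have "?g (v0 + t *\<^sub>R u) = ?g v0 + 2 * t * ((M *v v0) \<bullet> (M *v u)) + t^2 * ?g u"
        unfolding power2_norm_eq_inner
        by (simp add: matrix_vector_right_distrib matrix_vector_mult_scaleR
            inner_add_left inner_add_right inner_commute power2_eq_square algebra_simps)
      moreover have "(norm (v0 + t *\<^sub>R u))^2 = 1 + 2 * t * (v0 \<bullet> u) + t^2 * (norm u)^2"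
        using iv0 unfolding power2_norm_eq_inner by (simp add: inner_add_left inner_add_right inner_commute
            power2_eq_square algebra_simps)
      moreover have "(M *v v0) \<bullet> (M *v u) - l * (v0 \<bullet> u) = u \<bullet> u"
        using quad_form[of v0 M u] quad_form[of u M v0]
        by (simp add: u_def inner_diff_left inner_commute)
      ultimately show ?thesis unfolding b_def l_def by (simp add: algebra_simps)
    qed
    have uu: "u \<bullet> u > 0" using \<open>u \<noteq> 0\<close> by simp
    show False
    proof (cases "b = 0")
      case True then show False using key[of 1] uu by simp
    next
      case False
      define t where "t = (u \<bullet> u) / (- b)"
      have "-b > 0" using b False by simp
      then have tpos: "t > 0" using uu unfolding t_def by (rule divide_pos_pos[rotated])
      have "t * b = - (u \<bullet> u)" using False by (simp add: t_def)
      then have "2 * t * (u \<bullet> u) + t^2 * b = t * (u \<bullet> u)"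
      proof -
        have "t^2 * b = t * (t * b)" by (simp add: power2_eq_square)
        also have "\<dots> = - (t * (u \<bullet> u))" using \<open>t * b = - (u \<bullet> u)\<close> by simp
        finally show ?thesis by simp
      qed
      moreover have "t * (u \<bullet> u) > 0" using tpos uu by simp
      ultimately show False using key[of t] by linarith
    qed
  qed
  have l0: "l \<ge> 0" by (simp add: l_def)
  have mem: "sqrt l \<in> singular_values M"
  proof -
    have "?P *v v0 = l *\<^sub>R v0" using \<open>u = 0\<close> unfolding u_def by simp
    moreover have "(sqrt l)^2 = l" using l0 by simp
    moreover have "v0 \<noteq> 0" using nv0 by auto
    ultimately show ?thesis unfolding singular_values_def using l0 by auto
  qed
  have le: "s \<le> sqrt l" if sm: "s \<in> singular_values M" for s
  proof -
    obtain w where w: "w \<noteq> 0" "?P *v w = (s^2) *\<^sub>R w" "s \<ge> 0" using sm by (auto simp: singular_values_def)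
    have "?g w = w \<bullet> (?P *v w)" unfolding power2_norm_eq_inner quad_form ..
    also have "\<dots> = s^2 * (w \<bullet> w)" using w(2) by simp
    also have "\<dots> = s^2 * (norm w)^2" unfolding power2_norm_eq_inner ..
    finally have "s^2 * (norm w)^2 \<le> l * (norm w)^2" using gen[of w] by simp
    moreover have "(norm w)^2 > 0" using w(1) by simp
    ultimately have "s^2 \<le> l" by (rule mult_right_le_imp_le)
    then show ?thesis using w(3) real_le_rsqrt by blast
  qed
  have "sigma_max M = sqrt l" unfolding sigma_max_def
    using sv_finite[of M] mem le by (intro Max_eqI) auto
  moreover have "norm (M *v v) \<le> sqrt l * norm v"
  proof -
    have "(sqrt l * norm v)^2 = (sqrt l)^2 * (norm v)^2" by (rule power_mult_distrib)
    also have "\<dots> = l * (norm v)^2" using l0 by simp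
    finally have "(norm (M *v v))^2 \<le> (sqrt l * norm v)^2" using gen[of v] by simp
    then show ?thesis by (rule power2_le_imp_le) (simp add: l0)
  qed
  ultimately show ?thesis using l0 by simp
qed

lemma mm_col: fixes M D :: "real^'n^'n"
  shows "(M ** D)$i$j = (M *v column j D)$i"
  by (simp add: matrix_matrix_mult_def matrix_vector_mult_def column_def)

lemma frob: fixes M D :: "real^'n^'n"
  shows "norm (M ** D) \<le> sigma_max M * norm D"
proof -
  let ?s = "sigma_max M"
  have s0: "?s \<ge> 0" using sv_bound by blast
  have "(norm (M ** D))^2 = (\<Sum>i\<in>UNIV. \<Sum>j\<in>UNIV. ((M *v column j D)$i)^2)"
    unfolding norm_sq_mat mm_col ..
  also have "\<dots> = (\<Sum>j\<in>UNIV. \<Sum>i\<in>UNIV. ((M *v column j D)$i)^2)" by (rule sum.swap)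
  also have "\<dots> = (\<Sum>j\<in>UNIV. (norm (M *v column j D))^2)" unfolding norm_sq_vec ..
  also have "\<dots> \<le> (\<Sum>j\<in>UNIV. ?s^2 * (norm (column j D))^2)"
  proof (rule sum_mono)
    fix j
    have "norm (M *v column j D) \<le> ?s * norm (column j D)" using sv_bound by blast
    then have "(norm (M *v column j D))^2 \<le> (?s * norm (column j D))^2"
      by (rule power_mono) simp
    then show "(norm (M *v column j D))^2 \<le> ?s^2 * (norm (column j D))^2"
      by (simp add: power_mult_distrib)
  qed
  also have "\<dots> = ?s^2 * (\<Sum>j\<in>UNIV. \<Sum>i\<in>UNIV. (D$i$j)^2)"
    by (simp add: sum_distrib_left norm_sq_vec column_def)
  also have "\<dots> = ?s^2 * (norm D)^2"
    unfolding norm_sq_mat by (subst sum.swap) (rule refl)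
  also have "\<dots> = (?s * norm D)^2" by (simp add: power_mult_distrib)
  finally show ?thesis by (rule power2_le_imp_le) (simp add: s0)
qed

lemma abs_lip: fixes Z1 Z2 :: "real^'n^'n"
  shows "norm (mat_abs Z1 - mat_abs Z2) \<le> norm (Z1 - Z2)"
proof -
  have "(norm (mat_abs Z1 - mat_abs Z2))^2 \<le> (norm (Z1 - Z2))^2"
    unfolding norm_sq_mat
  proof (intro sum_mono)
    fix i j
    have "\<bar>\<bar>Z1$i$j\<bar> - \<bar>Z2$i$j\<bar>\<bar> \<le> \<bar>Z1$i$j - Z2$i$j\<bar>" by (rule abs_triangle_ineq3)
    then have "\<bar>\<bar>Z1$i$j\<bar> - \<bar>Z2$i$j\<bar>\<bar>^2 \<le> \<bar>Z1$i$j - Z2$i$j\<bar>^2" by (rule power_mono) simp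
    then show "((mat_abs Z1 - mat_abs Z2)$i$j)^2 \<le> ((Z1 - Z2)$i$j)^2"
      by (simp add: mat_abs_def)
  qed
  then show ?thesis by (rule power2_le_imp_le) simp
qed

lemma minv: fixes A :: "real^'n^'n" assumes "invertible A"
  shows "A ** matrix_inv A = mat 1" "matrix_inv A ** A = mat 1"
  using someI_ex[OF assms[unfolded invertible_def]] by (auto simp: matrix_inv_def)

lemma mm_diff: fixes A :: "real^'n^'n" shows "A ** (B - C) = A ** B - A ** C"
  by (simp add: matrix_matrix_mult_def vec_eq_iff sum_subtractf algebra_simps)

theorem proposition4p1:
  fixes A B C F :: "real^'n^'n"
  assumes "invertible A"
    and "sigma_max (C ** matrix_inv A ** B) < 1"
  shows "\<exists>!X :: real^'n^'n. A ** X + B ** mat_abs (C ** X) = F"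
proof -
  define Ai where "Ai = matrix_inv A"
  define M where "M = C ** Ai ** B"
  define G where "G = C ** Ai ** F"
  define T where "T Z = G - M ** mat_abs Z" for Z :: "real^'n^'n"
  have AAi: "A ** Ai = mat 1" "Ai ** A = mat 1" using minv[OF assms(1)] by (auto simp: Ai_def)
  let ?s = "sigma_max M"
  have s0: "?s \<ge> 0" using sv_bound by blast
  have s1: "?s < 1" using assms(2) by (simp add: M_def Ai_def)
  have "\<exists>!Z. T Z = Z"
  proof (rule banach_fix_type[OF s0 s1], intro allI)
    fix Z1 Z2
    have "T Z1 - T Z2 = M ** (mat_abs Z2 - mat_abs Z1)" by (simp add: T_def mm_diff)
    then have "dist (T Z1) (T Z2) = norm (M ** (mat_abs Z2 - mat_abs Z1))" by (simp add: dist_norm)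
    also have "\<dots> \<le> ?s * norm (mat_abs Z2 - mat_abs Z1)" by (rule frob)
    also have "\<dots> \<le> ?s * norm (Z2 - Z1)" by (rule mult_left_mono[OF abs_lip s0])
    finally show "dist (T Z1) (T Z2) \<le> ?s * dist Z1 Z2" by (simp add: dist_norm norm_minus_commute)
  qed
  then obtain Z where Z: "T Z = Z" and Zu: "\<And>W. T W = W \<Longrightarrow> W = Z" by metis
  have char: "A ** X + B ** mat_abs (C ** X) = F \<longleftrightarrow> X = Ai ** (F - B ** mat_abs (C ** X))" for X
  proof
    assume "A ** X + B ** mat_abs (C ** X) = F"
    then have "A ** X = F - B ** mat_abs (C ** X)" by (simp add: algebra_simps)
    then have "Ai ** (A ** X) = Ai ** (F - B ** mat_abs (C ** X))" by simp
    then show "X = Ai ** (F - B ** mat_abs (C ** X))" by (simp add: matrix_mul_assoc AAi)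
  next
    assume "X = Ai ** (F - B ** mat_abs (C ** X))"
    then have "A ** X = A ** (Ai ** (F - B ** mat_abs (C ** X)))" by simp
    then have "A ** X = F - B ** mat_abs (C ** X)" by (simp add: matrix_mul_assoc AAi)
    then show "A ** X + B ** mat_abs (C ** X) = F" by (simp add: algebra_simps)
  qed
  have CX: "C ** (Ai ** (F - B ** mat_abs W)) = T W" for W
    by (simp add: T_def G_def M_def mm_diff matrix_mul_assoc)
  show ?thesis
  proof (rule ex1I)
    let ?X = "Ai ** (F - B ** mat_abs Z)"
    have "C ** ?X = Z" using CX Z by simp
    then show "A ** ?X + B ** mat_abs (C ** ?X) = F" unfolding char by simp
  next
    fix X assume "A ** X + B ** mat_abs (C ** X) = F"
    then have X: "X = Ai ** (F - B ** mat_abs (C ** X))" using char by blast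
    then have "C ** X = T (C ** X)" using CX by metis
    then have "C ** X = Z" using Zu by metis
    then show "X = Ai ** (F - B ** mat_abs Z)" using X by simp
  qed
qed

end
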